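(* Let $n,k$ be positive integers, $F\subseteq\{1,\dots,n\}$ with $|F|=k$, and $0<\eta\le\frac1{4k}$. Let $x(t)\in\{0,1\}^n$ satisfy, for every $t\ge0$, $x_i(t)=1$ for $i\in F$ and $x_i(t)=0$ for $i\notin F$. Let $w(0)\in\mathbb R^n$ have all coordinates equal with $0<w_i(0)<\frac1{\sqrt k}$ for every $i$, and for $t\ge1$ define $w(t)=w(t-1)+\eta\,z(t-1)\big(x(t-1)-z(t-1)w(t-1)\big)$ where $z(t-1)=w(t-1)\cdot x(t-1)$. Then for every $t\ge1$: (1) all $w_i(t)$, $i\in F$, are equal, and all $w_i(t)$, $i\notin F$, are equal; (2) $0<w_i(t)<\frac1{\sqrt k}$ for every $i$; (3) $w_i(t)>w_i(0)$ for every $i\in F$; (4) $w_i(t)<w_i(0)$ for every $i\notin F$.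
   Context: This describes repeated application of Oja's learning rule to a single neuron that is engaged in learning at every step and always receives the same input vector. *)

theory Defs
  imports Complex_Main
begin

text \<open>Vectors in R^n are represented as functions nat => real, with coordinates indexed by 1..n.
  The dot product is the sum over 1..n.\<close>

definition dotn :: "nat \<Rightarrow> (nat \<Rightarrow> real) \<Rightarrow> (nat \<Rightarrow> real) \<Rightarrow> real" where
  "dotn n u v = (\<Sum>i=1..n. u i * v i)"

definition oja_step :: "nat \<Rightarrow> real \<Rightarrow> (nat \<Rightarrow> real) \<Rightarrow> (nat \<Rightarrow> real) \<Rightarrow> (nat \<Rightarrow> real)" where
  "oja_step n \<eta> xv w = (let z = dotn n w xv in (\<lambda>i. w i + \<eta> * z * (xv i - z * w i)))"

primrec oja_iter :: "nat \<Rightarrow> real \<Rightarrow> (nat \<Rightarrow> nat \<Rightarrow> real) \<Rightarrow> (nat \<Rightarrow> real) \<Rightarrow> nat \<Rightarrow> (nat \<Rightarrow> real)" where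
  "oja_iter n \<eta> x w0 0 = w0"
| "oja_iter n \<eta> x w0 (Suc t) = oja_step n \<eta> (x t) (oja_iter n \<eta> x w0 t)"

end

theory Submission
  imports Defs
begin

lemma key_ineq:
  fixes s c :: real
  assumes "0 \<le> s" "s < 1" "0 < c" "c \<le> 1/4"
  shows "s * (1 + c*(1-s))^2 < 1"
proof -
  define u where "u = 1 - s"
  have u: "0 < u" "u \<le> 1" using assms by (auto simp: u_def)
  have e: "s * (1 + c*(1-s))^2 - 1 = u * (2*c + c^2*u - 1 - 2*c*u - c^2*u^2)"
    unfolding u_def by (simp add: power2_eq_square algebra_simps)
  have "c^2*u \<le> 1/16"
  proof -
    have "c^2 \<le> (1/4)^2" using assms by (intro power_mono) auto
    hence "c^2 * u \<le> (1/4)^2 * 1" using u by (intro mult_mono) auto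
    moreover have "(1/4::real)^2 = 1/16" by (simp add: power2_eq_square)
    ultimately show ?thesis by linarith
  qed
  moreover have "0 \<le> 2*c*u" "0 \<le> c^2*u^2" using u assms by auto
  ultimately have "2*c + c^2*u - 1 - 2*c*u - c^2*u^2 < 0" using assms by linarith
  hence "u * (2*c + c^2*u - 1 - 2*c*u - c^2*u^2) < 0" using u by (simp add: mult_pos_neg)
  thus ?thesis using e by linarith
qed

theorem mainTheorem9:
  fixes n k :: nat and F :: "nat set" and \<eta> :: real
    and x :: "nat \<Rightarrow> nat \<Rightarrow> real" and w0 :: "nat \<Rightarrow> real"
  assumes "n > 0" and "k > 0"
    and "F \<subseteq> {1..n}" and "card F = k"
    and "0 < \<eta>" and "\<eta> \<le> 1 / (4 * real k)"
    and "\<And>t i. i \<in> F \<Longrightarrow> x t i = 1"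
    and "\<And>t i. i \<notin> F \<Longrightarrow> x t i = 0"
    and "\<And>i j. i \<in> {1..n} \<Longrightarrow> j \<in> {1..n} \<Longrightarrow> w0 i = w0 j"
    and "\<And>i. i \<in> {1..n} \<Longrightarrow> 0 < w0 i \<and> w0 i < 1 / sqrt (real k)"
  shows "\<forall>t\<ge>1.
      (\<forall>i\<in>F. \<forall>j\<in>F. oja_iter n \<eta> x w0 t i = oja_iter n \<eta> x w0 t j)
    \<and> (\<forall>i\<in>{1..n} - F. \<forall>j\<in>{1..n} - F. oja_iter n \<eta> x w0 t i = oja_iter n \<eta> x w0 t j)
    \<and> (\<forall>i\<in>{1..n}. 0 < oja_iter n \<eta> x w0 t i \<and> oja_iter n \<eta> x w0 t i < 1 / sqrt (real k))
    \<and> (\<forall>i\<in>F. oja_iter n \<eta> x w0 t i > w0 i)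
    \<and> (\<forall>i\<in>{1..n} - F. oja_iter n \<eta> x w0 t i < w0 i)"
proof -
  let ?W = "oja_iter n \<eta> x w0"
  define c where "c = w0 1"
  have w0c: "w0 i = c" if "i \<in> {1..n}" for i
    using assms(9)[OF that, of 1] assms(1) by (auto simp: c_def)
  have c0: "0 < c" and c1: "c < 1 / sqrt (real k)" using assms(10)[of 1] assms(1) by (auto simp: c_def)
  have kpos: "(0::real) < real k" using assms(2) by simp
  have sk: "sqrt (real k) > 0" using kpos by simp
  have lt_iff: "v < 1 / sqrt (real k) \<longleftrightarrow> real k * v^2 < 1" if "0 < v" for v :: real
  proof -
    have "v < 1 / sqrt (real k) \<longleftrightarrow> v * sqrt (real k) < 1" using sk by (simp add: field_simps)
    also have "v * sqrt (real k) = sqrt (real k * v^2)"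
      using that by (simp add: real_sqrt_mult)
    also have "sqrt (real k * v^2) < 1 \<longleftrightarrow> real k * v^2 < 1" by simp
    finally show ?thesis .
  qed
  define ck where "ck = \<eta> * real k"
  have ck0: "0 < ck" and ck1: "ck \<le> 1/4"
    using assms(5,6) kpos by (auto simp: ck_def field_simps)
  define a :: "nat \<Rightarrow> real" where "a = rec_nat c (\<lambda>t av. av + \<eta> * (real k * av) * (1 - real k * av * av))"
  define b :: "nat \<Rightarrow> real" where "b = rec_nat c (\<lambda>t bt. bt + \<eta> * (real k * a t) * (0 - real k * a t * bt))"
  have a0: "a 0 = c" and aS: "\<And>t. a (Suc t) = a t + \<eta> * (real k * a t) * (1 - real k * a t * a t)"
    by (simp_all add: a_def)
  have b0: "b 0 = c" and bS: "\<And>t. b (Suc t) = b t + \<eta> * (real k * a t) * (0 - real k * a t * b t)"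
    by (simp_all add: b_def)
  have dot: "dotn n w (x t) = real k * v" if "\<And>i. i \<in> F \<Longrightarrow> w i = v" for w v t
  proof -
    have "dotn n w (x t) = (\<Sum>i\<in>{1..n}. w i * x t i)" by (simp add: dotn_def)
    also have "\<dots> = (\<Sum>i\<in>F. w i * x t i)"
      using assms(3,8) by (intro sum.mono_neutral_right) auto
    also have "\<dots> = (\<Sum>i\<in>F. v)" using that assms(7) by simp
    also have "\<dots> = real k * v" using assms(4) by simp
    finally show ?thesis .
  qed
  have repr: "(\<forall>i\<in>F. ?W t i = a t) \<and> (\<forall>i\<in>{1..n}-F. ?W t i = b t)" for t
  proof (induction t)
    case 0
    then show ?case using w0c assms(3) a0 b0 by auto
  next
    case (Suc t)
    have d: "dotn n (?W t) (x t) = real k * a t" using Suc by (intro dot) auto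
    show ?case using Suc assms(7,8)
      by (auto simp: oja_step_def Let_def d aS bS)
  qed
  have ainv: "0 < a t \<and> real k * (a t)^2 < 1" for t
  proof (induction t)
    case 0
    then show ?case using c0 c1 lt_iff a0 by auto
  next
    case (Suc t)
    define s where "s = real k * (a t)^2"
    have s: "0 \<le> s" "s < 1" using Suc kpos by (auto simp: s_def)
    have e: "a (Suc t) = a t * (1 + ck*(1-s))"
      by (simp add: aS s_def ck_def power2_eq_square algebra_simps)
    have p: "0 < 1 + ck*(1-s)" using s ck0 by (simp add: add_pos_nonneg)
    have "real k * (a (Suc t))^2 = s * (1 + ck*(1-s))^2"
      by (simp add: e s_def power_mult_distrib)
    also have "\<dots> < 1" using key_ineq[OF s ck0 ck1] .
    finally show ?case using e p Suc by simp
  qed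
  have ainc: "a t < a (Suc t)" for t
  proof -
    define s where "s = real k * (a t)^2"
    have s: "0 \<le> s" "s < 1" using ainv[of t] kpos by (auto simp: s_def)
    have e: "a (Suc t) = a t + a t * (ck*(1-s))"
      by (simp add: aS s_def ck_def power2_eq_square algebra_simps)
    have "0 < a t * (ck*(1-s))" using ainv[of t] ck0 s by simp
    thus ?thesis using e by simp
  qed
  have binv: "0 < b t" "b t \<le> c" "b (Suc t) < b t" for t
  proof -
    have step: "b (Suc t) = b t * (1 - ck * (real k * (a t)^2))" for t
      by (simp add: bS ck_def power2_eq_square algebra_simps)
    have q: "0 < ck * (real k * (a t)^2)" "ck * (real k * (a t)^2) < 1" for t
    proof -
      show "0 < ck * (real k * (a t)^2)" using ck0 kpos ainv[of t] by simp
      have "ck * (real k * (a t)^2) \<le> 1/4 * 1"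
        using ck0 ck1 ainv[of t] kpos by (intro mult_mono) auto
      thus "ck * (real k * (a t)^2) < 1" by simp
    qed
    have pos: "0 < b t" for t
      by (induction t) (use c0 b0 step q in \<open>auto intro!: mult_pos_pos\<close>)
    have dec: "b (Suc t) < b t" for t
      using step[of t] pos[of t] q[of t] by (simp add: mult_less_cancel_left1)
    have le: "b t \<le> c" for t
      by (induction t) (use b0 dec in \<open>auto intro: order.trans less_imp_le\<close>)
    show "0 < b t" "b t \<le> c" "b (Suc t) < b t" using pos le dec by auto
  qed
  have agt: "c < a t" if "t \<ge> 1" for t
    using that
  proof (induction t rule: dec_induct)
    case base
    then show ?case using ainc[of 0] a0 by simp
  next
    case (step m)
    then show ?case using ainc[of m] by simp
  qed
  have blt: "b t < c" if "t \<ge> 1" for t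
    using that
  proof (induction t rule: dec_induct)
    case base
    then show ?case using binv(3)[of 0] b0 by simp
  next
    case (step m)
    then show ?case using binv(3)[of m] by simp
  qed
  show ?thesis
  proof (intro allI impI conjI ballI)
    fix t :: nat assume t: "1 \<le> t"
    show "?W t i = ?W t j" if "i \<in> F" "j \<in> F" for i j using repr[of t] that by auto
    show "?W t i = ?W t j" if "i \<in> {1..n}-F" "j \<in> {1..n}-F" for i j using repr[of t] that by auto
    show "w0 i < ?W t i" if "i \<in> F" for i
      using repr[of t] that agt[OF t] w0c assms(3) by auto
    show "?W t i < w0 i" if "i \<in> {1..n}-F" for i
      using repr[of t] that blt[OF t] w0c by auto
    fix i assume i: "i \<in> {1..n}"
    show "0 < ?W t i"
      using repr[of t] i ainv[of t] binv(1)[of t] by (cases "i \<in> F") auto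
    show "?W t i < 1 / sqrt (real k)"
    proof (cases "i \<in> F")
      case True
      then show ?thesis using repr[of t] ainv[of t] lt_iff by auto
    next
      case False
      then show ?thesis using repr[of t] i binv(1,2)[of t] c1 by auto
    qed
  qed
qed

end
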